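(* Let $V$ be a real vector space. Every maximal chain of vector subspaces of $V$ contains a unique basic subchain, and conversely every basic chain of vector subspaces of $V$ is contained in a unique maximal chain.
   Context: A chain of vector subspaces of $V$ is a set $F=\{F_a\}_{a\in A}$ of subspaces such that for $a\ne b$ one has a proper inclusion $F_a\subsetneq F_b$ or $F_b\subsetneq F_a$. A chain is maximal if it is not properly contained in another chain. A chain $F$ is basic if it is minimal (with respect to inclusion of chains) among chains with the following property: for every $x\in V$ there exist $F_a\subset F_b$ in $F$ with $\dim F_b/F_a=1$ and $x\in F_b\setminus F_a$. *)

theory Defs
  imports Complex_Main
begin

text \<open>The real vector space V is the whole type 'a. A chain is a set of linear
subspaces totally ordered by inclusion (distinct members are then properly nested).\<close>

definition subspace_chain :: "'a::real_vector set set \<Rightarrow> bool" where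
  "subspace_chain F \<longleftrightarrow> (\<forall>S\<in>F. subspace S) \<and> (\<forall>S\<in>F. \<forall>T\<in>F. S \<subseteq> T \<or> T \<subseteq> S)"

definition maximal_chain :: "'a::real_vector set set \<Rightarrow> bool" where
  "maximal_chain F \<longleftrightarrow> subspace_chain F \<and> (\<forall>G. subspace_chain G \<and> F \<subseteq> G \<longrightarrow> G = F)"

text \<open>dim (B / A) = 1 for subspaces A \<subseteq> B: B is spanned by A and one vector outside A.\<close>
definition quot_dim_one :: "'a::real_vector set \<Rightarrow> 'a set \<Rightarrow> bool" where
  "quot_dim_one A B \<longleftrightarrow> A \<subseteq> B \<and> (\<exists>v\<in>B. v \<notin> A \<and> B = span (insert v A))"

text \<open>Covering property (for nonzero vectors; 0 lies in every subspace).\<close>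
definition covers :: "'a::real_vector set set \<Rightarrow> bool" where
  "covers F \<longleftrightarrow> (\<forall>x. x \<noteq> 0 \<longrightarrow>
     (\<exists>A\<in>F. \<exists>B\<in>F. A \<subseteq> B \<and> quot_dim_one A B \<and> x \<in> B \<and> x \<notin> A))"

definition basic_chain :: "'a::real_vector set set \<Rightarrow> bool" where
  "basic_chain F \<longleftrightarrow> subspace_chain F \<and> covers F \<and>
     (\<forall>G. subspace_chain G \<and> covers G \<and> G \<subseteq> F \<longrightarrow> G = F)"

end

theory Submission
  imports Defs
begin

lemma qd1_between:
  fixes A B C :: "'a::real_vector set"
  assumes q: "quot_dim_one A B" and sA: "subspace A" and sC: "subspace C"
    and AC: "A \<subseteq> C" and CB: "C \<subseteq> B"
  shows "C = A \<or> C = B"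
proof (rule ccontr)
  assume n: "\<not> (C = A \<or> C = B)"
  then obtain w where w: "w \<in> C" "w \<notin> A" using AC by blast
  from q obtain v where v: "v \<in> B" "v \<notin> A" "B = span (insert v A)"
    unfolding quot_dim_one_def by blast
  have "w \<in> span (insert v A)" using w CB v by blast
  then obtain k where k: "w - k *\<^sub>R v \<in> span A" using span_breakdown_eq by blast
  have spA: "span A = A" using sA by (simp add: span_eq_iff)
  have "k \<noteq> 0" using k w spA by auto
  have "w - k *\<^sub>R v \<in> C" using k spA AC by auto
  hence "w - (w - k *\<^sub>R v) \<in> C" by (rule subspace_diff[OF sC w(1)])
  hence "k *\<^sub>R v \<in> C" by simp
  hence "inverse k *\<^sub>R (k *\<^sub>R v) \<in> C" by (rule subspace_scale[OF sC])
  hence "v \<in> C" using \<open>k \<noteq> 0\<close> by simp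
  hence "insert v A \<subseteq> C" using AC by blast
  hence "B \<subseteq> C" using v sC span_minimal by blast
  thus False using n CB by blast
qed

lemma key:
  fixes M :: "'a::real_vector set set"
  assumes ch: "subspace_chain M" and A: "A \<in> M" and B: "B \<in> M" and q: "quot_dim_one A B"
    and C: "C \<in> M"
  shows "C \<subseteq> A \<or> B \<subseteq> C"
proof -
  have sA: "subspace A" and sC: "subspace C" using ch A C unfolding subspace_chain_def by auto
  have cA: "C \<subseteq> A \<or> A \<subseteq> C" and cB: "C \<subseteq> B \<or> B \<subseteq> C"
    using ch A B C unfolding subspace_chain_def by auto
  show ?thesis
  proof (cases "C \<subseteq> A")
    case True thus ?thesis by simp
  next
    case False
    hence AC: "A \<subseteq> C" using cA by blast
    show ?thesis
    proof (cases "B \<subseteq> C")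
      case True thus ?thesis by simp
    next
      case False
      hence "C \<subseteq> B" using cB by blast
      hence "C = A \<or> C = B" using qd1_between[OF q sA sC AC] by blast
      thus ?thesis using False \<open>\<not> C \<subseteq> A\<close> by blast
    qed
  qed
qed

lemma jump_in_cover:
  fixes M G :: "'a::real_vector set set"
  assumes ch: "subspace_chain M" and GM: "G \<subseteq> M" and cov: "covers G"
    and A: "A \<in> M" and B: "B \<in> M" and q: "quot_dim_one A B"
  shows "A \<in> G \<and> B \<in> G"
proof -
  from q obtain v where v: "v \<in> B" "v \<notin> A" unfolding quot_dim_one_def by blast
  have "subspace A" using ch A unfolding subspace_chain_def by auto
  hence "v \<noteq> 0" using v subspace_0 by blast
  then obtain A' B' where AB': "A' \<in> G" "B' \<in> G" "quot_dim_one A' B'" "v \<in> B'" "v \<notin> A'"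
    using cov unfolding covers_def by blast
  have A'M: "A' \<in> M" and B'M: "B' \<in> M" using AB' GM by auto
  have 1: "A' \<subseteq> A" using key[OF ch A B q A'M] v AB' by blast
  have 2: "B \<subseteq> B'" using key[OF ch A B q B'M] v AB' by blast
  have 3: "A \<subseteq> A'" using key[OF ch A'M B'M AB'(3) A] v AB' by blast
  have 4: "B' \<subseteq> B" using key[OF ch A'M B'M AB'(3) B] v AB' by blast
  show ?thesis using 1 2 3 4 AB' by auto
qed

lemma maximal_covers:
  fixes M :: "'a::real_vector set set"
  assumes mx: "maximal_chain M"
  shows "covers M"
  unfolding covers_def
proof (intro allI impI)
  fix x :: 'a assume x0: "x \<noteq> 0"
  have ch: "subspace_chain M" using mx unfolding maximal_chain_def by auto
  have sub: "\<And>C. C \<in> M \<Longrightarrow> subspace C" using ch unfolding subspace_chain_def by auto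
  have cmp: "\<And>C D. C \<in> M \<Longrightarrow> D \<in> M \<Longrightarrow> C \<subseteq> D \<or> D \<subseteq> C"
    using ch unfolding subspace_chain_def by auto
  have addM: "S \<in> M" if sS: "subspace S" and cS: "\<And>D. D \<in> M \<Longrightarrow> S \<subseteq> D \<or> D \<subseteq> S" for S
  proof -
    have "subspace_chain (insert S M)" using ch sS cS unfolding subspace_chain_def by blast
    hence "insert S M = M" using mx unfolding maximal_chain_def by blast
    thus ?thesis by blast
  qed
  define A where "A = insert 0 (\<Union>{C \<in> M. x \<notin> C})"
  have sA: "subspace A"
    unfolding subspace_def
  proof (intro conjI ballI allI)
    show "0 \<in> A" unfolding A_def by simp
  next
    fix y z assume y: "y \<in> A" and z: "z \<in> A"
    show "y + z \<in> A"
    proof (cases "y = 0")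
      case True thus ?thesis using z by simp
    next
      case yn: False
      show ?thesis
      proof (cases "z = 0")
        case True thus ?thesis using y by simp
      next
        case False
        then obtain C2 where C2: "C2 \<in> M" "x \<notin> C2" "z \<in> C2" using z unfolding A_def by blast
        obtain C1 where C1: "C1 \<in> M" "x \<notin> C1" "y \<in> C1" using y yn unfolding A_def by blast
        have "y + z \<in> C1 \<or> y + z \<in> C2"
          using cmp[OF C1(1) C2(1)] sub[OF C1(1)] sub[OF C2(1)] C1 C2
          by (meson subset_iff subspace_add)
        thus ?thesis using C1 C2 unfolding A_def by blast
      qed
    qed
  next
    fix c :: real and y assume y: "y \<in> A"
    show "c *\<^sub>R y \<in> A"
    proof (cases "y = 0")
      case True thus ?thesis unfolding A_def by simp
    next
      case False
      then obtain C1 where C1: "C1 \<in> M" "x \<notin> C1" "y \<in> C1" using y unfolding A_def by blast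
      have "c *\<^sub>R y \<in> C1" using sub[OF C1(1)] C1 by (simp add: subspace_scale)
      thus ?thesis using C1 unfolding A_def by blast
    qed
  qed
  have xA: "x \<notin> A" using x0 unfolding A_def by blast
  have Ale: "A \<subseteq> D" if "D \<in> M" "x \<in> D" for D
  proof -
    have "C \<subseteq> D" if "C \<in> M" "x \<notin> C" for C using cmp[OF that(1) \<open>D \<in> M\<close>] that \<open>x \<in> D\<close> by blast
    thus ?thesis unfolding A_def using sub[OF \<open>D \<in> M\<close>] subspace_0 by blast
  qed
  have Age: "D \<subseteq> A" if "D \<in> M" "x \<notin> D" for D using that unfolding A_def by blast
  have AM: "A \<in> M"
    by (rule addM[OF sA]) (use Ale Age in blast)
  define S where "S = span (insert x A)"
  have sS: "subspace S" unfolding S_def by (rule subspace_span)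
  have SM: "S \<in> M"
  proof (rule addM[OF sS])
    fix D assume D: "D \<in> M"
    show "S \<subseteq> D \<or> D \<subseteq> S"
    proof (cases "x \<in> D")
      case True
      hence "insert x A \<subseteq> D" using Ale[OF D] by blast
      hence "S \<subseteq> D" unfolding S_def using span_minimal sub[OF D] by blast
      thus ?thesis by blast
    next
      case False
      hence "D \<subseteq> A" using Age D by blast
      hence "D \<subseteq> S" unfolding S_def using span_superset by blast
      thus ?thesis by blast
    qed
  qed
  have xS: "x \<in> S" unfolding S_def by (simp add: span_base)
  have AS: "A \<subseteq> S" unfolding S_def using span_superset by blast
  have "quot_dim_one A S" unfolding quot_dim_one_def using AS xS xA S_def by blast
  thus "\<exists>A\<in>M. \<exists>B\<in>M. A \<subseteq> B \<and> quot_dim_one A B \<and> x \<in> B \<and> x \<notin> A"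
    using AM SM AS xS xA by blast
qed

lemma part1:
  fixes M :: "'a::real_vector set set"
  assumes mx: "maximal_chain M"
  shows "\<exists>!B. B \<subseteq> M \<and> basic_chain B"
proof -
  have ch: "subspace_chain M" using mx unfolding maximal_chain_def by auto
  define J where "J = {C \<in> M. \<exists>D\<in>M. quot_dim_one C D \<or> quot_dim_one D C}"
  have JM: "J \<subseteq> M" unfolding J_def by blast
  have chJ: "subspace_chain J" using ch JM unfolding subspace_chain_def by blast
  have covJ: "covers J"
    unfolding covers_def
  proof (intro allI impI)
    fix x :: 'a assume "x \<noteq> 0"
    then obtain A B where AB: "A \<in> M" "B \<in> M" "A \<subseteq> B" "quot_dim_one A B" "x \<in> B" "x \<notin> A"
      using maximal_covers[OF mx] unfolding covers_def by meson
    have "A \<in> J" "B \<in> J" unfolding J_def using AB by auto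
    thus "\<exists>A\<in>J. \<exists>B\<in>J. A \<subseteq> B \<and> quot_dim_one A B \<and> x \<in> B \<and> x \<notin> A"
      using AB by meson
  qed
  have least: "J \<subseteq> G" if GM: "G \<subseteq> M" and cG: "covers G" for G
  proof
    fix C assume "C \<in> J"
    then obtain D where D: "C \<in> M" "D \<in> M" "quot_dim_one C D \<or> quot_dim_one D C"
      unfolding J_def by blast
    show "C \<in> G"
    proof (cases "quot_dim_one C D")
      case True thus ?thesis using jump_in_cover[OF ch GM cG D(1) D(2)] by simp
    next
      case False
      hence "quot_dim_one D C" using D by simp
      thus ?thesis using jump_in_cover[OF ch GM cG D(2) D(1)] by simp
    qed
  qed
  have bJ: "basic_chain J"
    unfolding basic_chain_def
  proof (intro conjI allI impI)
    fix G assume G: "subspace_chain G \<and> covers G \<and> G \<subseteq> J"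
    hence "J \<subseteq> G" using least JM by auto
    thus "G = J" using G by auto
  qed (rule chJ, rule covJ)
  show ?thesis
  proof (rule ex1I[of _ J])
    show "J \<subseteq> M \<and> basic_chain J" using JM bJ by blast
  next
    fix B assume B: "B \<subseteq> M \<and> basic_chain B"
    hence "J \<subseteq> B" using least unfolding basic_chain_def by auto
    thus "B = J" using B chJ covJ unfolding basic_chain_def by auto
  qed
qed

lemma part2_unique:
  fixes B M1 M2 :: "'a::real_vector set set"
  assumes cov: "covers B" and m1: "maximal_chain M1" and m2: "maximal_chain M2"
    and b1: "B \<subseteq> M1" and b2: "B \<subseteq> M2"
  shows "M1 = M2"
proof -
  have ch1: "subspace_chain M1" using m1 unfolding maximal_chain_def by auto
  have ch2: "subspace_chain M2" using m2 unfolding maximal_chain_def by auto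
  have cmp: "C2 \<subseteq> C1" if c: "C1 \<in> Ma" "C2 \<in> Mb" "\<not> C1 \<subseteq> C2"
    and cha: "subspace_chain Ma" and chb: "subspace_chain Mb" and ba: "B \<subseteq> Ma" and bb: "B \<subseteq> Mb"
    for C1 C2 Ma Mb
  proof -
    obtain x where x: "x \<in> C1" "x \<notin> C2" using c by blast
    have "subspace C2" using chb c unfolding subspace_chain_def by auto
    hence "x \<noteq> 0" using x subspace_0 by blast
    then obtain A B' where AB: "A \<in> B" "B' \<in> B" "quot_dim_one A B'" "x \<in> B'" "x \<notin> A"
      using cov unfolding covers_def by blast
    have "C1 \<subseteq> A \<or> B' \<subseteq> C1" using key[OF cha _ _ AB(3) c(1)] AB ba by blast
    hence 1: "B' \<subseteq> C1" using x AB by blast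
    have "C2 \<subseteq> A \<or> B' \<subseteq> C2" using key[OF chb _ _ AB(3) c(2)] AB bb by blast
    hence 2: "C2 \<subseteq> A" using x AB by blast
    have "A \<subseteq> B'" using AB(3) unfolding quot_dim_one_def by blast
    thus ?thesis using 1 2 by blast
  qed
  have "subspace_chain (M1 \<union> M2)"
    unfolding subspace_chain_def
  proof (intro conjI ballI)
    fix S assume "S \<in> M1 \<union> M2" thus "subspace S" using ch1 ch2 unfolding subspace_chain_def by blast
  next
    fix S T assume S: "S \<in> M1 \<union> M2" and T: "T \<in> M1 \<union> M2"
    show "S \<subseteq> T \<or> T \<subseteq> S"
    proof (cases "S \<subseteq> T")
      case True thus ?thesis by simp
    next
      case nST: False
      consider "S \<in> M1" "T \<in> M1" | "S \<in> M2" "T \<in> M2" | "S \<in> M1" "T \<in> M2" | "S \<in> M2" "T \<in> M1"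
        using S T by auto
      thus ?thesis
      proof cases
        case 1 thus ?thesis using ch1 unfolding subspace_chain_def by simp
      next
        case 2 thus ?thesis using ch2 unfolding subspace_chain_def by simp
      next
        case 3 thus ?thesis using cmp[OF 3 nST ch1 ch2 b1 b2] by simp
      next
        case 4 thus ?thesis using cmp[OF 4 nST ch2 ch1 b2 b1] by simp
      qed
    qed
  qed
  hence "M1 \<union> M2 = M1" "M1 \<union> M2 = M2" using m1 m2 unfolding maximal_chain_def by blast+
  thus ?thesis by blast
qed

lemma union_chain:
  assumes h1: "\<forall>X\<in>K. subspace_chain X" and h2: "\<forall>X\<in>K. \<forall>Y\<in>K. X \<subseteq> Y \<or> Y \<subseteq> X"
  shows "subspace_chain (\<Union>K)"
  unfolding subspace_chain_def
proof (intro conjI ballI)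
  fix S assume "S \<in> \<Union>K"
  then obtain X where X: "X \<in> K" "S \<in> X" by (rule UnionE)
  hence "subspace_chain X" using h1 by simp
  thus "subspace S" using X(2) unfolding subspace_chain_def by simp
next
  fix S T assume S: "S \<in> \<Union>K" and T: "T \<in> \<Union>K"
  obtain X where X: "X \<in> K" "S \<in> X" using S by (rule UnionE)
  obtain Y where Y: "Y \<in> K" "T \<in> Y" using T by (rule UnionE)
  have cX: "subspace_chain X" using h1 X(1) by simp
  have cY: "subspace_chain Y" using h1 Y(1) by simp
  have XY2: "X \<subseteq> Y \<or> Y \<subseteq> X" using h2 X(1) Y(1) by simp
  show "S \<subseteq> T \<or> T \<subseteq> S"
  proof (cases "X \<subseteq> Y")
    case True
    hence "S \<in> Y" using X(2) by (rule subsetD)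
    thus ?thesis using cY Y(2) unfolding subspace_chain_def by simp
  next
    case False
    hence "Y \<subseteq> X" using XY2 by simp
    hence "T \<in> X" using Y(2) by (rule subsetD)
    thus ?thesis using cX X(2) unfolding subspace_chain_def by simp
  qed
qed

lemma part2_exists:
  fixes B :: "'a::real_vector set set"
  assumes ch: "subspace_chain B"
  shows "\<exists>M. maximal_chain M \<and> B \<subseteq> M"
proof -
  define AA where "AA = {G. subspace_chain G \<and> B \<subseteq> G}"
  have "\<exists>M\<in>AA. \<forall>X\<in>AA. M \<subseteq> X \<longrightarrow> X = M"
  proof (rule subset_Zorn)
    fix C assume C: "subset.chain AA C"
    have CA: "C \<subseteq> AA" and Cc: "\<forall>X\<in>C. \<forall>Y\<in>C. X \<subseteq> Y \<or> Y \<subseteq> X"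
      using C unfolding subset.chain_def by auto
    have IC: "\<forall>X\<in>insert B C. subspace_chain X \<and> (\<forall>Y\<in>insert B C. X \<subseteq> Y \<or> Y \<subseteq> X)"
    proof
      fix X assume X: "X \<in> insert B C"
      have "subspace_chain X" using X ch CA unfolding AA_def by auto
      moreover have "\<forall>Y\<in>insert B C. X \<subseteq> Y \<or> Y \<subseteq> X"
      proof
        fix Y assume Y: "Y \<in> insert B C"
        show "X \<subseteq> Y \<or> Y \<subseteq> X"
        proof (cases "X = B")
          case True thus ?thesis using Y CA unfolding AA_def by auto
        next
          case False
          hence XC: "X \<in> C" using X by simp
          show ?thesis
          proof (cases "Y = B")
            case True thus ?thesis using XC CA unfolding AA_def by auto
          next
            case False thus ?thesis using Y XC Cc by simp
          qed
        qed
      qed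
      ultimately show "subspace_chain X \<and> (\<forall>Y\<in>insert B C. X \<subseteq> Y \<or> Y \<subseteq> X)" by simp
    qed
    have "subspace_chain (\<Union>(insert B C))"
      by (rule union_chain) (use IC in simp_all)
    hence "subspace_chain (B \<union> \<Union>C)" by simp
    hence "B \<union> \<Union>C \<in> AA" unfolding AA_def by simp
    moreover have "\<forall>X\<in>C. X \<subseteq> B \<union> \<Union>C" by auto
    ultimately show "\<exists>U\<in>AA. \<forall>X\<in>C. X \<subseteq> U" by blast
  qed
  then obtain M where M: "M \<in> AA" "\<forall>X\<in>AA. M \<subseteq> X \<longrightarrow> X = M" by blast
  have "maximal_chain M" unfolding maximal_chain_def
  proof (intro conjI allI impI)
    show "subspace_chain M" using M(1) unfolding AA_def by simp
  next
    fix G assume "subspace_chain G \<and> M \<subseteq> G"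
    hence "G \<in> AA" using M(1) unfolding AA_def by auto
    thus "G = M" using M(2) \<open>subspace_chain G \<and> M \<subseteq> G\<close> by simp
  qed
  moreover have "B \<subseteq> M" using M(1) unfolding AA_def by simp
  ultimately show ?thesis by blast
qed

theorem lemma4:
  shows "(\<forall>M::'a::real_vector set set. maximal_chain M \<longrightarrow> (\<exists>!B. B \<subseteq> M \<and> basic_chain B))
       \<and> (\<forall>B::'a set set. basic_chain B \<longrightarrow> (\<exists>!M. maximal_chain M \<and> B \<subseteq> M))"
proof (intro conjI allI impI)
  fix M :: "'a set set" assume "maximal_chain M"
  thus "\<exists>!B. B \<subseteq> M \<and> basic_chain B" by (rule part1)
next
  fix B :: "'a set set" assume b: "basic_chain B"
  hence ch: "subspace_chain B" and cov: "covers B" unfolding basic_chain_def by auto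
  obtain M where M: "maximal_chain M" "B \<subseteq> M" using part2_exists[OF ch] by blast
  show "\<exists>!M. maximal_chain M \<and> B \<subseteq> M"
    using M part2_unique[OF cov] by blast
qed

end
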